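(* Let $\alpha$ be a curve in $\mathbb{R}^3$ with nonzero curvature, let $\alpha_T$ be its tangent indicatrix, and let $\beta$ be a Bertrand-direction curve of $\alpha_T$ (an $X$-direction curve of $\alpha_T$ with $N_\beta=N_T$). Then $\alpha$ is a slant helix if and only if $\beta$ is a helix.
   Context: Let $\alpha:I\subset\mathbb{R}\to\mathbb{R}^3$ be a unit-speed curve with curvature $\kappa>0$, torsion $\tau$ and Frenet frame $\{T,N,B\}$. The tangent indicatrix of $\alpha$ is the curve $\alpha_T=T$ on the unit sphere. Its arc length is $s_T=\int\kappa\,ds$. Its Frenet apparatus is $\{T_T,N_T,B_T,\kappa_T,\tau_T\}$, with $\frac{dT_T}{ds_T}=\kappa_TN_T$, $\frac{dN_T}{ds_T}=-\kappa_TT_T+\tau_TB_T$ and $\frac{dB_T}{ds_T}=-\tau_TN_T$. Let $x,y,z$ be real functions of $s_T$ with $x^2+y^2+z^2=1$, and set $X=xT_T+yN_T+zB_T$. An integral curve $\beta$ of $X$, meaning $d\beta/ds_T=X$, is an $X$-direction curve of $\alpha_T$. It is regarded as a unit-speed Frenet curve with frame $\{T_\beta=X,N_\beta,B_\beta\}$, curvature $\kappa_\beta>0$ and torsion $\tau_\beta$. $\beta$ is a Bertrand-direction curve of $\alpha_T$ if $N_\beta=N_T$. A curve with curvature $k>0$ and torsion $t$ is a helix if its unit tangent makes a constant angle with a fixed line; equivalently, $t/k$ is constant. It is a slant helix if its principal normal makes a constant angle with a fixed line; equivalently, $\frac{k^2}{(k^2+t^2)^{3/2}}(t/k)'$ is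 constant, where $'$ is the derivative with respect to arc length. *)

theory Defs
  imports "HOL-Analysis.Analysis"
begin

text \<open>For a unit-speed curve
  with positive curvature these data are uniquely determined by gamma.\<close>
definition frenet ::
  "(real \<Rightarrow> real^3) \<Rightarrow> real set \<Rightarrow> (real \<Rightarrow> real^3) \<Rightarrow> (real \<Rightarrow> real^3) \<Rightarrow>
   (real \<Rightarrow> real^3) \<Rightarrow> (real \<Rightarrow> real) \<Rightarrow> (real \<Rightarrow> real) \<Rightarrow> bool" where
  "frenet \<gamma> J T N B k t \<longleftrightarrow>
     (\<forall>s\<in>J. (\<gamma> has_vector_derivative T s) (at s)
        \<and> norm (T s) = 1
        \<and> k s > 0
        \<and> norm (N s) = 1
        \<and> T s \<bullet> N s = 0
        \<and> B s = cross3 (T s) (N s)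
        \<and> (T has_vector_derivative (k s *\<^sub>R N s)) (at s)
        \<and> (N has_vector_derivative (- k s *\<^sub>R T s + t s *\<^sub>R B s)) (at s)
        \<and> (B has_vector_derivative (- t s *\<^sub>R N s)) (at s))"

text \<open>A vector field V along a curve (parameter set J) makes a constant angle with a
  fixed line spanned by the unit vector u iff V s \<bullet> u is constant (= cos of the angle).\<close>
definition const_angle_with_line :: "real set \<Rightarrow> (real \<Rightarrow> real^3) \<Rightarrow> bool" where
  "const_angle_with_line J V \<longleftrightarrow> (\<exists>u c. norm u = 1 \<and> (\<forall>s\<in>J. V s \<bullet> u = c))"

definition helix :: "(real \<Rightarrow> real^3) \<Rightarrow> real set \<Rightarrow> bool" where
  "helix \<gamma> J \<longleftrightarrow> (\<exists>T N B k t. frenet \<gamma> J T N B k t \<and> const_angle_with_line J T)"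

definition slant_helix :: "(real \<Rightarrow> real^3) \<Rightarrow> real set \<Rightarrow> bool" where
  "slant_helix \<gamma> J \<longleftrightarrow> (\<exists>T N B k t. frenet \<gamma> J T N B k t \<and> const_angle_with_line J N)"

end

theory Submission
  imports Defs
begin

lemma dinner: fixes g :: "real \<Rightarrow> real^3"
  assumes "(g has_vector_derivative g') (at s)"
  shows "((\<lambda>s. g s \<bullet> u) has_real_derivative (g' \<bullet> u)) (at s)"
  using assms unfolding has_real_derivative_iff_has_vector_derivative
  using bounded_linear.has_vector_derivative[OF bounded_linear_inner_left]
  by blast

lemma dcomp: fixes F :: "real \<Rightarrow> real^3"
  assumes "(F has_vector_derivative F') (at (\<phi> s))"
    and "(\<phi> has_real_derivative k) (at s)"
  shows "((\<lambda>s. F (\<phi> s) \<bullet> u) has_real_derivative (k * (F' \<bullet> u))) (at s)"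
proof -
  have "((F \<circ> \<phi>) has_vector_derivative (k *\<^sub>R F')) (at s)"
    by (rule vector_diff_chain_at) (use assms in \<open>auto simp: has_real_derivative_iff_has_vector_derivative\<close>)
  from dinner[OF this, of u] show ?thesis by (simp add: o_def)
qed

lemma const_deriv0:
  fixes f :: "real \<Rightarrow> real"
  assumes "open I" "s \<in> I" "\<And>s. s \<in> I \<Longrightarrow> f s = c" "(f has_real_derivative d) (at s)"
  shows "d = 0"
proof -
  have "((\<lambda>_. c) has_real_derivative d) (at s)"
    by (rule has_field_derivative_transform_within_open[OF assms(4) assms(1,2)]) (use assms(3) in auto)
  moreover have "((\<lambda>_. c) has_real_derivative 0) (at s)" by simp
  ultimately show ?thesis using DERIV_unique by blast
qed

lemma deriv0_const:
  fixes f :: "real \<Rightarrow> real"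
  assumes "is_interval I" "\<And>s. s \<in> I \<Longrightarrow> (f has_real_derivative 0) (at s)"
  shows "\<exists>c. \<forall>s\<in>I. f s = c"
  using assms by (intro has_field_derivative_zero_constant)
    (auto simp: is_interval_convex_1 intro: has_field_derivative_at_within)

lemma uniqT:
  assumes "frenet \<gamma> J T N B k t" "frenet \<gamma> J T2 N2 B2 k2 t2" "s \<in> J"
  shows "T2 s = T s"
proof -
  have "(\<gamma> has_vector_derivative T s) (at s)" "(\<gamma> has_vector_derivative T2 s) (at s)"
    using assms unfolding frenet_def by auto
  then show ?thesis by (metis vector_derivative_unique_at)
qed

lemma uniqN:
  assumes "frenet \<gamma> J T N B k t" "frenet \<gamma> J T2 N2 B2 k2 t2" "s \<in> J" "open J"
  shows "N2 s = N s"
proof -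
  have d2: "(T2 has_vector_derivative (k2 s *\<^sub>R N2 s)) (at s)" "k2 s > 0" "norm (N2 s) = 1"
    using assms unfolding frenet_def by auto
  have d1: "(T has_vector_derivative (k s *\<^sub>R N s)) (at s)" "k s > 0" "norm (N s) = 1"
    using assms unfolding frenet_def by auto
  have "(T has_vector_derivative (k2 s *\<^sub>R N2 s)) (at s)"
    by (rule has_vector_derivative_transform_within_open[OF d2(1) assms(4,3)])
      (use uniqT[OF assms(1,2)] in auto)
  then have e: "k2 s *\<^sub>R N2 s = k s *\<^sub>R N s" using d1(1) vector_derivative_unique_at by blast
  then have "norm (k2 s *\<^sub>R N2 s) = norm (k s *\<^sub>R N s)" by simp
  then have "k2 s = k s" using d1 d2 by simp
  with e d1 show ?thesis by simp
qed

theorem theorem5p7: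
  fixes \<alpha> :: "real \<Rightarrow> real^3" and I :: "real set"
    and T N B :: "real \<Rightarrow> real^3" and \<kappa> \<tau> :: "real \<Rightarrow> real"
    and \<phi> :: "real \<Rightarrow> real"
    and \<alpha>T TT NT BT :: "real \<Rightarrow> real^3" and \<kappa>T \<tau>T :: "real \<Rightarrow> real"
    and x y z :: "real \<Rightarrow> real"
    and \<beta> Tb Nb Bb :: "real \<Rightarrow> real^3" and \<kappa>b \<tau>b :: "real \<Rightarrow> real"
  assumes I: "open I" "is_interval I" "I \<noteq> {}"
    and \<alpha>: "frenet \<alpha> I T N B \<kappa> \<tau>"
    and sT: "\<And>s. s \<in> I \<Longrightarrow> (\<phi> has_real_derivative \<kappa> s) (at s)"
    and \<alpha>T_def: "\<And>s. s \<in> I \<Longrightarrow> \<alpha>T (\<phi> s) = T s"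
    and \<alpha>T: "frenet \<alpha>T (\<phi> ` I) TT NT BT \<kappa>T \<tau>T"
    and xyz: "\<And>u. u \<in> \<phi> ` I \<Longrightarrow> (x u)\<^sup>2 + (y u)\<^sup>2 + (z u)\<^sup>2 = 1"
    and X: "\<And>u. u \<in> \<phi> ` I \<Longrightarrow> Tb u = x u *\<^sub>R TT u + y u *\<^sub>R NT u + z u *\<^sub>R BT u"
    and \<beta>: "frenet \<beta> (\<phi> ` I) Tb Nb Bb \<kappa>b \<tau>b"
    and bertrand: "\<And>u. u \<in> \<phi> ` I \<Longrightarrow> Nb u = NT u"
  shows "slant_helix \<alpha> I \<longleftrightarrow> helix \<beta> (\<phi> ` I)"
proof -
  obtain s0 where s0: "s0 \<in> I" using I(3) by blast
  have F1: "TT (\<phi> s) = N s" if s: "s \<in> I" for s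
  proof -
    have "((\<alpha>T \<circ> \<phi>) has_vector_derivative (\<kappa> s *\<^sub>R TT (\<phi> s))) (at s)"
      by (rule vector_diff_chain_at)
        (use sT[OF s] \<alpha>T s in \<open>auto simp: has_real_derivative_iff_has_vector_derivative frenet_def\<close>)
    then have "(T has_vector_derivative (\<kappa> s *\<^sub>R TT (\<phi> s))) (at s)"
      by (rule has_vector_derivative_transform_within_open[OF _ I(1) s]) (use \<alpha>T_def in auto)
    moreover have "(T has_vector_derivative (\<kappa> s *\<^sub>R N s)) (at s)" "\<kappa> s > 0"
      using \<alpha> s unfolding frenet_def by auto
    ultimately have "\<kappa> s *\<^sub>R TT (\<phi> s) = \<kappa> s *\<^sub>R N s" using vector_derivative_unique_at by blast
    with \<open>\<kappa> s > 0\<close> show ?thesis by simp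
  qed
  have dTT: "((\<lambda>s. TT (\<phi> s) \<bullet> u) has_real_derivative (\<kappa> s * ((\<kappa>T (\<phi> s) *\<^sub>R NT (\<phi> s)) \<bullet> u))) (at s)"
    if s: "s \<in> I" for s u
    by (rule dcomp) (use \<alpha>T sT s in \<open>auto simp: frenet_def\<close>)
  have dTb: "((\<lambda>s. Tb (\<phi> s) \<bullet> u) has_real_derivative (\<kappa> s * ((\<kappa>b (\<phi> s) *\<^sub>R NT (\<phi> s)) \<bullet> u))) (at s)"
    if s: "s \<in> I" for s u
  proof -
    have "(Tb has_vector_derivative (\<kappa>b (\<phi> s) *\<^sub>R NT (\<phi> s))) (at (\<phi> s))"
      using \<beta> s bertrand[of "\<phi> s"] unfolding frenet_def by auto
    then show ?thesis by (rule dcomp) (use sT s in auto)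
  qed
  have pos: "\<kappa> s > 0" "\<kappa>T (\<phi> s) > 0" "\<kappa>b (\<phi> s) > 0" if "s \<in> I" for s
    using \<alpha> \<alpha>T \<beta> that unfolding frenet_def by auto
  show ?thesis
  proof
    assume "slant_helix \<alpha> I"
    then obtain T2 N2 B2 k2 t2 u c where fr: "frenet \<alpha> I T2 N2 B2 k2 t2" and u: "norm u = 1"
      and c: "\<And>s. s \<in> I \<Longrightarrow> N2 s \<bullet> u = c"
      unfolding slant_helix_def const_angle_with_line_def by blast
    have c2: "TT (\<phi> s) \<bullet> u = c" if "s \<in> I" for s
      using c[OF that] uniqN[OF \<alpha> fr that I(1)] F1[OF that] by simp
    have NT0: "NT (\<phi> s) \<bullet> u = 0" if s: "s \<in> I" for s
    proof -
      have "\<kappa> s * ((\<kappa>T (\<phi> s) *\<^sub>R NT (\<phi> s)) \<bullet> u) = 0"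
        by (rule const_deriv0[OF I(1) s c2 dTT[OF s]])
      then show ?thesis using pos[OF s] by simp
    qed
    have "\<exists>c. \<forall>s\<in>I. Tb (\<phi> s) \<bullet> u = c"
    proof (rule deriv0_const[OF I(2)])
      fix s assume s: "s \<in> I"
      show "((\<lambda>s. Tb (\<phi> s) \<bullet> u) has_real_derivative 0) (at s)"
        using dTb[OF s, of u] by (simp add: NT0[OF s])
    qed
    then obtain c' where c': "\<And>s. s \<in> I \<Longrightarrow> Tb (\<phi> s) \<bullet> u = c'" by blast
    have "\<forall>v\<in>\<phi> ` I. Tb v \<bullet> u = c'" using c' by blast
    then have "const_angle_with_line (\<phi> ` I) Tb"
      unfolding const_angle_with_line_def using u by blast
    then show "helix \<beta> (\<phi> ` I)"
      unfolding helix_def using \<beta> by blast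
  next
    assume "helix \<beta> (\<phi> ` I)"
    then obtain T2 N2 B2 k2 t2 where fr: "frenet \<beta> (\<phi> ` I) T2 N2 B2 k2 t2"
      and ca: "const_angle_with_line (\<phi> ` I) T2"
      unfolding helix_def by blast
    from ca obtain u c where u: "norm u = 1" and c0: "\<forall>v\<in>\<phi> ` I. T2 v \<bullet> u = c"
      unfolding const_angle_with_line_def by blast
    have c: "T2 v \<bullet> u = c" if "v \<in> \<phi> ` I" for v using c0 that by blast
    have c2: "Tb (\<phi> s) \<bullet> u = c" if "s \<in> I" for s
      using c[of "\<phi> s"] uniqT[OF \<beta> fr, of "\<phi> s"] that by simp
    have NT0: "NT (\<phi> s) \<bullet> u = 0" if s: "s \<in> I" for s
    proof -
      have "\<kappa> s * ((\<kappa>b (\<phi> s) *\<^sub>R NT (\<phi> s)) \<bullet> u) = 0"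
        by (rule const_deriv0[OF I(1) s c2 dTb[OF s]])
      then show ?thesis using pos[OF s] by simp
    qed
    have "\<exists>c. \<forall>s\<in>I. TT (\<phi> s) \<bullet> u = c"
    proof (rule deriv0_const[OF I(2)])
      fix s assume s: "s \<in> I"
      show "((\<lambda>s. TT (\<phi> s) \<bullet> u) has_real_derivative 0) (at s)"
        using dTT[OF s, of u] by (simp add: NT0[OF s])
    qed
    then obtain c' where c0: "\<And>s. s \<in> I \<Longrightarrow> TT (\<phi> s) \<bullet> u = c'" by blast
    have c': "\<forall>s\<in>I. N s \<bullet> u = c'" using c0 F1 by simp
    then have "const_angle_with_line I N"
      unfolding const_angle_with_line_def using u by blast
    then show "slant_helix \<alpha> I"
      unfolding slant_helix_def using \<alpha> by blast
  qed
qed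

end
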